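(* Fix $\omega\in\Omega_*$. Let $h:\mathbb R^d\to\mathbb R$ be continuous with $|h(x)|\le c/(1+|x|^{d+1})$ for all $x$ and some constant $c$, and suppose $h^\varepsilon_\omega\in L^2(\mu^\varepsilon_\omega)$ converges strongly to $h\in L^2(m\,dx)$. Then $$\lim_{\varepsilon\downarrow0}\int_{\mathbb R^d}|h^\varepsilon_\omega(x)-h(x)|^2\mu^\varepsilon_\omega(dx)=0 .$$
   Context: Setting: $d\ge2$, $c_0>0$, $\mathbb E_d$ non-oriented nearest-neighbour bonds of $\mathbb Z^d$, $\Omega=[0,c_0]^{\mathbb E_d}$ (product topology), $\omega(x,y)=\omega(\{x,y\})$, $\tau_x\omega(\{y,z\})=\omega(\{y+x,z+x\})$. $\mathbb Q$ Borel probability on $\Omega$, invariant and ergodic under $(\tau_x)$. $\Omega_0$: the $\omega$ for which the graph of bonds with $\omega(b)>0$ has a unique infinite cluster, vertex set $\mathcal C(\omega)$; $\mathbb Q(\Omega_0)=1$; $m=\mathbb Q(0\in\mathcal C(\omega))$. $\mathcal B=\{e\in\mathbb Z^d:|e|=1\}$. $\mu^\varepsilon_\omega=\varepsilon^d\sum_{x\in\mathcal C(\omega)}\delta_{\varepsilon x}$. Convergence: $g^\varepsilon\in L^2(\mu^\varepsilon_\omega)$ converges weakly to $g\in L^2(m\,dx)$ if $\sup_\varepsilon\|g^\varepsilon\|_{L^2(\mu^\varepsilon_\omega)}<\infty$ and $\int g^\varepsilon\varphi\,d\mu^\varepsilon_\omega\to\int g\varphi\,m\,dx$ for all $\varphi\in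 C_c^\infty(\mathbb R^d)$; it converges strongly if $\sup_\varepsilon\|g^\varepsilon\|<\infty$ and $\int g^\varepsilon\varphi^\varepsilon d\mu^\varepsilon_\omega\to\int g\varphi\,m\,dx$ for every family $\varphi^\varepsilon\in L^2(\mu^\varepsilon_\omega)$ converging weakly to $\varphi$. $\mu(d\omega)=\mathbb 1_{\{0\in\mathcal C(\omega)\}}\mathbb Q(d\omega)$; $\int v\,dM=\sum_{e\in\mathcal B}\int\omega(0,e)v(\omega,e)\mu(d\omega)$; $\hat\omega(0,e)=\mathbb 1_{\{\omega(0,e)>0\}}$; $\nabla^{(\omega)}u(\omega,e)=\hat\omega(0,e)[u(\tau_e\omega)-u(\omega)]$; $\nabla^{(\omega)*}v(\omega)=\sum_e\omega(0,e)[v(\omega,e)-v(\tau_e\omega,-e)]$; $L^2_{\rm sol}(M)$ is the orthogonal complement of the closure of gradients of local functions. Regular environments: fix $(\psi_j)$ dense in $L^2_{\rm sol}(M)$ (fixed representatives), $\Psi_{j,e}(\omega)=\sqrt{\omega(0,e)}\psi_j(\omega,e)$, and continuous $f^{(k)}_{j,e}\to\Psi_{j,e}$ in $L^2(\mu)$. $\Omega_{*,j}$: $\omega\in\Omega_0$ with $\nabla^{(\omega)*}\psi_j(\tau_x\omega)=0$ for all $x\in\mathcal C(\omega)$ and $\lim_{\varepsilon\downarrow0}\int_{[-n,n]^d}(f^{(k)}_{j,e}-\Psi_{j,e})^2(\tau_{z/\varepsilon}\omega)\mu^\varepsilon_\omega(dz)=(2n)^d\|f^{(k)}_{j,e}-\Psi_{j,e}\|^2_{L^2(\mu)}$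 for all $e,k,n$. $\Omega_1$: $\omega\in\Omega_0$ with $\mu^\varepsilon_\omega([-\ell,\ell]^d)\to m(2\ell)^d$ for all $\ell>0$ and $\int\varphi(z)u(\tau_{z/\varepsilon}\omega)\mu^\varepsilon_\omega(dz)\to\int\varphi\,dz\int u\,d\mu$ for all $\varphi\in C_c(\mathbb R^d)$, $u\in C(\Omega)$. $\Omega_*=\Omega_1\cap\bigcap_j\Omega_{*,j}$. *)

theory Defs
  imports "HOL-Analysis.Analysis" "HOL-Probability.Probability"
begin

type_synonym 'd env = "(int ^ 'd) set \<Rightarrow> real"

definition unitB :: "(int ^ 'd::finite) set" where
  "unitB = {e. (\<Sum>i\<in>UNIV. (e $ i)^2) = 1}"

definition bonds :: "(int ^ 'd::finite) set set" where
  "bonds = {{x, y} | x y. y - x \<in> unitB}"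

text \<open>Omega = [0,c0]^(E_d) with the product sigma-algebra (= Borel sigma-algebra of the
  product topology, since the product is countable).\<close>
definition OmegaM :: "real \<Rightarrow> ('d::finite) env measure" where
  "OmegaM c0 = PiM bonds (\<lambda>_. restrict_space borel {0..c0})"

definition Omega :: "real \<Rightarrow> ('d::finite) env set" where
  "Omega c0 = space (OmegaM c0)"

definition shift :: "int ^ 'd::finite \<Rightarrow> 'd env \<Rightarrow> 'd env" where
  "shift x \<omega> = (\<lambda>b. if b \<in> bonds then \<omega> ((\<lambda>y. y + x) ` b) else undefined)"

definition adj :: "('d::finite) env \<Rightarrow> int ^ 'd \<Rightarrow> int ^ 'd \<Rightarrow> bool" where
  "adj \<omega> x y \<longleftrightarrow> {x, y} \<in> bonds \<and> \<omega> {x, y} > 0"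

definition cluster :: "('d::finite) env \<Rightarrow> int ^ 'd \<Rightarrow> (int ^ 'd) set" where
  "cluster \<omega> x = {y. (adj \<omega>)\<^sup>*\<^sup>* x y}"

definition Omega0 :: "real \<Rightarrow> ('d::finite) env set" where
  "Omega0 c0 = {\<omega> \<in> Omega c0. \<exists>!C. (\<exists>x. C = cluster \<omega> x) \<and> infinite C}"

text \<open>The vertex set C(omega) of the unique infinite cluster (meaningful on Omega0).\<close>
definition Cinf :: "('d::finite) env \<Rightarrow> (int ^ 'd) set" where
  "Cinf \<omega> = (THE C. (\<exists>x. C = cluster \<omega> x) \<and> infinite C)"

definition mdens :: "('d::finite) env measure \<Rightarrow> real \<Rightarrow> real" where
  "mdens Q c0 = measure Q {\<omega> \<in> Omega0 c0. 0 \<in> Cinf \<omega>}"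

definition muQ :: "('d::finite) env measure \<Rightarrow> real \<Rightarrow> 'd env measure" where
  "muQ Q c0 = density Q (indicator {\<omega> \<in> Omega0 c0. 0 \<in> Cinf \<omega>})"

definition Mmeas :: "('d::finite) env measure \<Rightarrow> real \<Rightarrow> ('d env \<times> (int ^ 'd)) measure" where
  "Mmeas Q c0 = density (muQ Q c0 \<Otimes>\<^sub>M count_space unitB) (\<lambda>(\<omega>, e). ennreal (\<omega> {0, e}))"

definition ohat :: "('d::finite) env \<Rightarrow> int ^ 'd \<Rightarrow> real" where
  "ohat \<omega> e = (if \<omega> {0, e} > 0 then 1 else 0)"

definition grad :: "(('d::finite) env \<Rightarrow> real) \<Rightarrow> 'd env \<times> (int ^ 'd) \<Rightarrow> real" where
  "grad u = (\<lambda>(\<omega>, e). ohat \<omega> e * (u (shift e \<omega>) - u \<omega>))"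

definition div_star :: "(('d::finite) env \<times> (int ^ 'd) \<Rightarrow> real) \<Rightarrow> 'd env \<Rightarrow> real" where
  "div_star v \<omega> = (\<Sum>e\<in>unitB. \<omega> {0, e} * (v (\<omega>, e) - v (shift e \<omega>, - e)))"

definition local_fun :: "('d::finite) env measure \<Rightarrow> real \<Rightarrow> ('d env \<Rightarrow> real) \<Rightarrow> bool" where
  "local_fun Q c0 u \<longleftrightarrow> u \<in> borel_measurable Q \<and> bounded (u ` Omega c0) \<and>
     (\<exists>F. finite F \<and> F \<subseteq> bonds \<and>
        (\<forall>\<omega>\<in>Omega c0. \<forall>\<omega>'\<in>Omega c0. (\<forall>b\<in>F. \<omega> b = \<omega>' b) \<longrightarrow> u \<omega> = u \<omega>'))"

definition L2 :: "'a measure \<Rightarrow> ('a \<Rightarrow> real) \<Rightarrow> bool" where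
  "L2 M v \<longleftrightarrow> v \<in> borel_measurable M \<and> integrable M (\<lambda>z. (v z)^2)"

text \<open>L^2_sol(M): orthogonal complement (in L^2(M)) of the closure of gradients of local
  functions, i.e. of the gradients of local functions themselves.\<close>
definition L2sol :: "('d::finite) env measure \<Rightarrow> real \<Rightarrow> ('d env \<times> (int ^ 'd) \<Rightarrow> real) set" where
  "L2sol Q c0 = {v. L2 (Mmeas Q c0) v \<and>
     (\<forall>u. local_fun Q c0 u \<longrightarrow> (LINT z|Mmeas Q c0. v z * grad u z) = 0)}"

definition Psi :: "(nat \<Rightarrow> ('d::finite) env \<times> (int ^ 'd) \<Rightarrow> real) \<Rightarrow> nat \<Rightarrow> int ^ 'd \<Rightarrow> 'd env \<Rightarrow> real" where
  "Psi \<psi> j e \<omega> = sqrt (\<omega> {0, e}) * \<psi> j (\<omega>, e)"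

definition emb :: "int ^ 'd::finite \<Rightarrow> real ^ 'd" where
  "emb x = (\<chi> i. real_of_int (x $ i))"

definition cube :: "real \<Rightarrow> (real ^ 'd::finite) set" where
  "cube r = {z. \<forall>i. \<bar>z $ i\<bar> \<le> r}"

text \<open>Integral against mu^eps_omega = eps^d sum_{x in C(omega)} delta_{eps x}.\<close>
definition eps_int :: "('d::finite) env \<Rightarrow> real \<Rightarrow> (real ^ 'd \<Rightarrow> real) \<Rightarrow> real" where
  "eps_int \<omega> \<epsilon> g = \<epsilon> ^ CARD('d) * (\<Sum>\<^sub>\<infinity>x\<in>Cinf \<omega>. g (\<epsilon> *\<^sub>R emb x))"

text \<open>int G(z, tau_{z/eps} omega) mu^eps_omega(dz).\<close>
definition eps_int_sh :: "('d::finite) env \<Rightarrow> real \<Rightarrow> (real ^ 'd \<Rightarrow> 'd env \<Rightarrow> real) \<Rightarrow> real" where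
  "eps_int_sh \<omega> \<epsilon> G = \<epsilon> ^ CARD('d) * (\<Sum>\<^sub>\<infinity>x\<in>Cinf \<omega>. G (\<epsilon> *\<^sub>R emb x) (shift x \<omega>))"

definition L2eps :: "('d::finite) env \<Rightarrow> real \<Rightarrow> (real ^ 'd \<Rightarrow> real) \<Rightarrow> bool" where
  "L2eps \<omega> \<epsilon> g \<longleftrightarrow> (\<lambda>x. (g (\<epsilon> *\<^sub>R emb x))^2) summable_on Cinf \<omega>"

definition pdiff :: "'d::finite \<Rightarrow> (real ^ 'd \<Rightarrow> real) \<Rightarrow> real ^ 'd \<Rightarrow> real" where
  "pdiff i f x = deriv (\<lambda>t. f (x + t *\<^sub>R axis i 1)) 0"

fun iter_pdiff :: "'d::finite list \<Rightarrow> (real ^ 'd \<Rightarrow> real) \<Rightarrow> real ^ 'd \<Rightarrow> real" where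
  "iter_pdiff [] f = f"
| "iter_pdiff (i # is) f = pdiff i (iter_pdiff is f)"

definition smooth :: "(real ^ 'd::finite \<Rightarrow> real) \<Rightarrow> bool" where
  "smooth f \<longleftrightarrow> (\<forall>is. continuous_on UNIV (iter_pdiff is f) \<and>
     (\<forall>i x. (\<lambda>t. iter_pdiff is f (x + t *\<^sub>R axis i 1)) differentiable (at 0)))"

definition Cc :: "(real ^ 'd::finite \<Rightarrow> real) \<Rightarrow> bool" where
  "Cc f \<longleftrightarrow> continuous_on UNIV f \<and> compact (closure {z. f z \<noteq> 0})"

definition Cc_inf :: "(real ^ 'd::finite \<Rightarrow> real) \<Rightarrow> bool" where
  "Cc_inf f \<longleftrightarrow> smooth f \<and> compact (closure {z. f z \<noteq> 0})"

definition weak_conv :: "real \<Rightarrow> ('d::finite) env \<Rightarrow> (real \<Rightarrow> real ^ 'd \<Rightarrow> real) \<Rightarrow> (real ^ 'd \<Rightarrow> real) \<Rightarrow> bool" where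
  "weak_conv m \<omega> g\<epsilon> g \<longleftrightarrow>
     (\<forall>\<epsilon>>0. L2eps \<omega> \<epsilon> (g\<epsilon> \<epsilon>)) \<and>
     (\<exists>B. eventually (\<lambda>\<epsilon>. eps_int \<omega> \<epsilon> (\<lambda>z. (g\<epsilon> \<epsilon> z)^2) \<le> B) (at_right 0)) \<and>
     L2 lborel g \<and>
     (\<forall>\<phi>. Cc_inf \<phi> \<longrightarrow>
        ((\<lambda>\<epsilon>. eps_int \<omega> \<epsilon> (\<lambda>z. g\<epsilon> \<epsilon> z * \<phi> z)) \<longlongrightarrow> m * (LINT x|lborel. g x * \<phi> x)) (at_right 0))"

definition strong_conv :: "real \<Rightarrow> ('d::finite) env \<Rightarrow> (real \<Rightarrow> real ^ 'd \<Rightarrow> real) \<Rightarrow> (real ^ 'd \<Rightarrow> real) \<Rightarrow> bool" where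
  "strong_conv m \<omega> g\<epsilon> g \<longleftrightarrow>
     (\<forall>\<epsilon>>0. L2eps \<omega> \<epsilon> (g\<epsilon> \<epsilon>)) \<and>
     (\<exists>B. eventually (\<lambda>\<epsilon>. eps_int \<omega> \<epsilon> (\<lambda>z. (g\<epsilon> \<epsilon> z)^2) \<le> B) (at_right 0)) \<and>
     L2 lborel g \<and>
     (\<forall>\<phi>\<epsilon> \<phi>. weak_conv m \<omega> \<phi>\<epsilon> \<phi> \<longrightarrow>
        ((\<lambda>\<epsilon>. eps_int \<omega> \<epsilon> (\<lambda>z. g\<epsilon> \<epsilon> z * \<phi>\<epsilon> \<epsilon> z)) \<longlongrightarrow> m * (LINT x|lborel. g x * \<phi> x)) (at_right 0))"

definition Omega1 :: "('d::finite) env measure \<Rightarrow> real \<Rightarrow> 'd env set" where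
  "Omega1 Q c0 = {\<omega> \<in> Omega0 c0.
     (\<forall>l>0. ((\<lambda>\<epsilon>. eps_int \<omega> \<epsilon> (indicator (cube l)))
              \<longlongrightarrow> mdens Q c0 * (2 * l) ^ CARD('d)) (at_right 0)) \<and>
     (\<forall>\<phi> u. Cc \<phi> \<and> continuous_on (Omega c0) u \<longrightarrow>
        ((\<lambda>\<epsilon>. eps_int_sh \<omega> \<epsilon> (\<lambda>z \<omega>'. \<phi> z * u \<omega>'))
           \<longlongrightarrow> (LINT z|lborel. \<phi> z) * (LINT \<omega>'|muQ Q c0. u \<omega>')) (at_right 0))}"

definition OmegaStar_j :: "('d::finite) env measure \<Rightarrow> real \<Rightarrow> (nat \<Rightarrow> 'd env \<times> (int ^ 'd) \<Rightarrow> real)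
    \<Rightarrow> (nat \<Rightarrow> int ^ 'd \<Rightarrow> nat \<Rightarrow> 'd env \<Rightarrow> real) \<Rightarrow> nat \<Rightarrow> 'd env set" where
  "OmegaStar_j Q c0 \<psi> f j = {\<omega> \<in> Omega0 c0.
     (\<forall>x\<in>Cinf \<omega>. div_star (\<psi> j) (shift x \<omega>) = 0) \<and>
     (\<forall>e\<in>unitB. \<forall>k. \<forall>n::nat. n \<ge> 1 \<longrightarrow>
        ((\<lambda>\<epsilon>. eps_int_sh \<omega> \<epsilon> (\<lambda>z \<omega>'. indicator (cube (real n)) z * (f j e k \<omega>' - Psi \<psi> j e \<omega>')^2))
          \<longlongrightarrow> (2 * real n) ^ CARD('d) * (LINT \<omega>'|muQ Q c0. (f j e k \<omega>' - Psi \<psi> j e \<omega>')^2))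
        (at_right 0))}"

definition OmegaStar :: "('d::finite) env measure \<Rightarrow> real \<Rightarrow> (nat \<Rightarrow> 'd env \<times> (int ^ 'd) \<Rightarrow> real)
    \<Rightarrow> (nat \<Rightarrow> int ^ 'd \<Rightarrow> nat \<Rightarrow> 'd env \<Rightarrow> real) \<Rightarrow> 'd env set" where
  "OmegaStar Q c0 \<psi> f = Omega1 Q c0 \<inter> (\<Inter>j. OmegaStar_j Q c0 \<psi> f j)"

end

theory Submission
  imports Defs
begin


lemma cube_cbox: "cube r = cbox (- vec r) (vec r :: real ^ 'd::finite)"
  unfolding set_eq_iff cube_def mem_box_cart mem_Collect_eq
  by (intro allI iff_allI) (auto simp: abs_le_iff)

lemma compact_cube: "compact (cube r)"
  by (simp add: cube_cbox)

lemma measure_cube: "r \<ge> 0 \<Longrightarrow> measure lborel (cube r :: (real ^ 'd::finite) set) = (2*r) ^ CARD('d)"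
proof -
  assume r: "r \<ge> 0"
  have "0 \<in> cbox (- vec r) (vec r :: real ^ 'd::finite)" using r by (simp add: mem_box_cart)
  then have "cbox (- vec r) (vec r :: real ^ 'd::finite) \<noteq> {}" by blast
  then show ?thesis by (simp add: cube_cbox content_cbox_cart)
qed

lemma finite_box: "finite {x::int^'d::finite. \<forall>i. \<bar>x$i\<bar> \<le> N}"
proof -
  have "{x::int^'d. \<forall>i. \<bar>x$i\<bar> \<le> N} \<subseteq> vec_lambda ` PiE UNIV (\<lambda>_. {-N..N})"
  proof
    fix x :: "int^'d" assume "x \<in> {x. \<forall>i. \<bar>x$i\<bar> \<le> N}"
    then have hyp: "\<And>i. \<bar>x$i\<bar> \<le> N" by simp
    have "x$i \<in> {-N..N}" for i using hyp[of i] by (auto simp: abs_le_iff)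
    then have "(\<lambda>i. x$i) \<in> PiE UNIV (\<lambda>_. {-N..N})" unfolding PiE_UNIV_domain Pi_iff by auto
    moreover have "x = vec_lambda (\<lambda>i. x$i)" by simp
    ultimately show "x \<in> vec_lambda ` PiE UNIV (\<lambda>_. {-N..N})" by blast
  qed
  moreover have "finite (PiE (UNIV::'d set) (\<lambda>_. {-N..N}))" by (simp add: finite_PiE)
  ultimately show ?thesis using finite_subset by blast
qed

lemma finite_lattice_in_cube:
  assumes "\<epsilon> > 0"
  shows "finite {x::int^'d::finite. \<epsilon> *\<^sub>R emb x \<in> cube r}"
proof -
  have "{x::int^'d. \<epsilon> *\<^sub>R emb x \<in> cube r} \<subseteq> {x. \<forall>i. \<bar>x$i\<bar> \<le> \<lceil>r/\<epsilon>\<rceil>}"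
  proof safe
    fix x :: "int^'d" and i assume "\<epsilon> *\<^sub>R emb x \<in> cube r"
    then have "\<bar>\<epsilon> * real_of_int (x$i)\<bar> \<le> r" by (auto simp: cube_def emb_def)
    then have "\<bar>real_of_int (x$i)\<bar> \<le> r/\<epsilon>" using assms
      by (simp add: abs_mult pos_le_divide_eq mult.commute)
    then have "real_of_int \<bar>x$i\<bar> \<le> real_of_int \<lceil>r/\<epsilon>\<rceil>"
      using le_of_int_ceiling order_trans by fastforce
    then show "\<bar>x$i\<bar> \<le> \<lceil>r/\<epsilon>\<rceil>" by linarith
  qed
  then show ?thesis using finite_box finite_subset by blast
qed

lemma summable_support_cube:
  fixes g :: "real^'d::finite \<Rightarrow> real"
  assumes "\<epsilon> > 0" "\<And>z. z \<notin> cube r \<Longrightarrow> g z = 0"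
  shows "(\<lambda>x. g (\<epsilon> *\<^sub>R emb x)) summable_on A"
proof -
  let ?F = "{x::int^'d::finite. \<epsilon> *\<^sub>R emb x \<in> cube r}"
  have "(\<lambda>x. g (\<epsilon> *\<^sub>R emb x)) summable_on (A \<inter> ?F)"
    using finite_lattice_in_cube[OF assms(1), of r] by (intro summable_on_finite) (rule finite_subset[OF Int_lower2])
  moreover have "(\<lambda>x. g (\<epsilon> *\<^sub>R emb x)) summable_on A \<longleftrightarrow> (\<lambda>x. g (\<epsilon> *\<^sub>R emb x)) summable_on (A \<inter> ?F)"
    by (rule summable_on_cong_neutral) (use assms(2) in auto)
  ultimately show ?thesis by simp
qed

lemma Cc_cube:
  fixes g :: "real^'d::finite \<Rightarrow> real"
  assumes "compact (closure {z. g z \<noteq> 0})"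
  obtains r where "r \<ge> 0" "\<And>z. z \<notin> cube r \<Longrightarrow> g z = (0::real)"
proof -
  obtain r where r: "\<And>z. z \<in> closure {z. g z \<noteq> 0} \<Longrightarrow> norm z \<le> r"
    using compact_imp_bounded[OF assms] unfolding bounded_iff by blast
  have "g z = 0" if z: "z \<notin> cube (max r 0)" for z
  proof (rule ccontr)
    assume "g z \<noteq> 0"
    then have "z \<in> closure {z. g z \<noteq> 0}" by (meson closure_subset mem_Collect_eq subsetD)
    then have nz: "norm z \<le> r" by (rule r)
    have "\<bar>z$i\<bar> \<le> max r 0" for i
      using order_trans[OF component_le_norm_cart nz] by (meson max.coboundedI1)
    then have "z \<in> cube (max r 0)" unfolding cube_def by simp
    with z show False by simp
  qed
  then show ?thesis using that[of "max r 0"] by simp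
qed

lemma eps_int_mono:
  assumes "\<epsilon> > 0" "(\<lambda>x. f (\<epsilon> *\<^sub>R emb x)) summable_on Cinf \<omega>" "(\<lambda>x. g (\<epsilon> *\<^sub>R emb x)) summable_on Cinf \<omega>"
    "\<And>z. f z \<le> g z"
  shows "eps_int \<omega> \<epsilon> f \<le> eps_int \<omega> \<epsilon> g"
proof -
  have "infsum (\<lambda>x. f (\<epsilon> *\<^sub>R emb x)) (Cinf \<omega>) \<le> infsum (\<lambda>x. g (\<epsilon> *\<^sub>R emb x)) (Cinf \<omega>)"
    by (rule infsum_mono[OF assms(2,3)]) (rule assms(4))
  then show ?thesis unfolding eps_int_def using assms(1) by (simp add: mult_left_mono)
qed


definition wt :: "real \<Rightarrow> real" where "wt s = 1 / (1 + \<bar>s\<bar>)^2"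
definition Wt :: "real^'d::finite \<Rightarrow> real" where "Wt z = (\<Prod>i\<in>UNIV. wt (z$i))"

lemma wt_nonneg: "wt s \<ge> 0" by (simp add: wt_def)
lemma Wt_nonneg: "Wt z \<ge> 0" by (simp add: Wt_def wt_nonneg prod_nonneg)

lemma wt_sum_1d:
  assumes "\<epsilon> > 0"
  shows "(\<Sum>n\<in>{-int k..int k}. wt (\<epsilon> * of_int n)) \<le> 1 + (2/\<epsilon>) * (1 - 1/(1 + \<epsilon> * k))"
proof (induction k)
  case 0
  then show ?case by (simp add: wt_def)
next
  case (Suc k)
  let ?a = "1 + \<epsilon> * real k" and ?b = "1 + \<epsilon> * real (Suc k)"
  have a: "?a \<ge> 1" using assms by simp
  have ab: "?b = ?a + \<epsilon>" by (simp add: algebra_simps)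
  have set: "{-int (Suc k)..int (Suc k)} = insert (-int (Suc k)) (insert (int (Suc k)) {-int k..int k})"
    by auto
  have sum: "(\<Sum>n\<in>{-int (Suc k)..int (Suc k)}. wt (\<epsilon> * of_int n))
      = (\<Sum>n\<in>{-int k..int k}. wt (\<epsilon> * of_int n)) + 2 / ?b^2"
    unfolding set using assms by (simp add: wt_def abs_mult add.commute)
  have key: "2 / ?b^2 \<le> (2/\<epsilon>) * (1/?a - 1/?b)"
  proof -
    have bpos: "?b > 0" using assms by (simp add: add_pos_nonneg)
    have "1/?a - 1/?b = (?b - ?a)/(?a*?b)" using a bpos by (simp add: field_simps)
    also have "?b - ?a = \<epsilon>" by (simp add: algebra_simps)
    finally have "(2/\<epsilon>) * (1/?a - 1/?b) = (2/\<epsilon>) * (\<epsilon>/(?a*?b))" by simp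
    also have "\<dots> = 2 / (?a * ?b)" using assms by simp
    finally have "(2/\<epsilon>) * (1/?a - 1/?b) = 2 / (?a * ?b)" .
    moreover have "2 / ?b^2 \<le> 2 / (?a * ?b)"
    proof (rule divide_left_mono)
      show "?a * ?b \<le> ?b^2" unfolding power2_eq_square using a bpos assms
        by (intro mult_right_mono) (auto simp: ab)
      show "0 < ?b^2 * (?a * ?b)" using a bpos by (intro mult_pos_pos) auto
    qed simp
    ultimately show ?thesis by simp
  qed
  show ?case using Suc.IH sum key by (simp add: algebra_simps)
qed

lemma wt_sum_1d':
  assumes "\<epsilon> > 0" "N \<ge> 0"
  shows "(\<Sum>n\<in>{-N..N}. wt (\<epsilon> * of_int n)) \<le> 1 + 2/\<epsilon>"
proof -
  have "(\<Sum>n\<in>{-N..N}. wt (\<epsilon> * of_int n)) \<le> 1 + (2/\<epsilon>) * (1 - 1/(1 + \<epsilon> * nat N))"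
    using wt_sum_1d[OF assms(1), of "nat N"] assms(2) by simp
  also have "\<dots> \<le> 1 + 2/\<epsilon>" using assms by (simp add: field_simps)
  finally show ?thesis .
qed

lemma box_eq_image:
  "{x::int^'d::finite. \<forall>i. \<bar>x$i\<bar> \<le> N} = vec_lambda ` PiE UNIV (\<lambda>_. {-N..N})"
proof
  show "{x::int^'d. \<forall>i. \<bar>x$i\<bar> \<le> N} \<subseteq> vec_lambda ` PiE UNIV (\<lambda>_. {-N..N})"
  proof
    fix x :: "int^'d" assume "x \<in> {x. \<forall>i. \<bar>x$i\<bar> \<le> N}"
    then have hyp: "\<And>i. \<bar>x$i\<bar> \<le> N" by simp
    have "x$i \<in> {-N..N}" for i using hyp[of i] by (auto simp: abs_le_iff)
    then have "(\<lambda>i. x$i) \<in> PiE UNIV (\<lambda>_. {-N..N})" unfolding PiE_UNIV_domain Pi_iff by auto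
    moreover have "x = vec_lambda (\<lambda>i. x$i)" by simp
    ultimately show "x \<in> vec_lambda ` PiE UNIV (\<lambda>_. {-N..N})" by blast
  qed
  show "vec_lambda ` PiE UNIV (\<lambda>_. {-N..N}) \<subseteq> {x::int^'d. \<forall>i. \<bar>x$i\<bar> \<le> N}"
  proof (rule subsetI)
    fix y assume "y \<in> vec_lambda ` PiE UNIV (\<lambda>_::'d. {-N..N})"
    then obtain f where f: "f \<in> PiE UNIV (\<lambda>_. {-N..N})" "y = vec_lambda f" by blast
    have fi: "\<bar>f i\<bar> \<le> N" for i using PiE_mem[OF f(1), of i] by (simp add: abs_le_iff)
    show "y \<in> {x::int^'d. \<forall>i. \<bar>x$i\<bar> \<le> N}" using f(2) fi by simp
  qed
qed

lemma box_sum: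
  "(\<Sum>x\<in>{x::int^'d::finite. \<forall>i. \<bar>x$i\<bar> \<le> N}. Wt (\<epsilon> *\<^sub>R emb x))
     = (\<Prod>i\<in>(UNIV::'d set). \<Sum>n\<in>{-N..N}. wt (\<epsilon> * of_int n))"
proof -
  have inj: "inj_on (vec_lambda :: ('d \<Rightarrow> int) \<Rightarrow> int^'d) A" for A
    by (rule inj_onI) (metis vec_lambda_inverse UNIV_I)
  have "(\<Sum>x\<in>{x::int^'d. \<forall>i. \<bar>x$i\<bar> \<le> N}. Wt (\<epsilon> *\<^sub>R emb x))
       = (\<Sum>f\<in>PiE UNIV (\<lambda>_. {-N..N}). Wt (\<epsilon> *\<^sub>R emb (vec_lambda f :: int^'d)))"
    unfolding box_eq_image by (rule sum.reindex[OF inj, unfolded comp_def])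
  also have "\<dots> = (\<Sum>f\<in>PiE UNIV (\<lambda>_. {-N..N}). \<Prod>i\<in>(UNIV::'d set). wt (\<epsilon> * of_int (f i)))"
    by (simp add: Wt_def emb_def)
  also have "\<dots> = (\<Prod>i\<in>(UNIV::'d set). \<Sum>n\<in>{-N..N}. wt (\<epsilon> * of_int n))"
    by (rule prod_sum_PiE[symmetric]) auto
  finally show ?thesis .
qed

lemma finite_bounded_box:
  assumes "finite (F :: (int^'d::finite) set)"
  obtains N where "N \<ge> 0" "F \<subseteq> {x. \<forall>i. \<bar>x$i\<bar> \<le> N}"
proof -
  let ?N = "\<Sum>x\<in>F. \<Sum>i\<in>UNIV. \<bar>x$i\<bar>"
  have "\<bar>x$i\<bar> \<le> ?N" if "x \<in> F" for x i
  proof -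
    have "\<bar>x$i\<bar> \<le> (\<Sum>i\<in>UNIV. \<bar>x$i\<bar>)" by (rule member_le_sum) auto
    also have "\<dots> \<le> ?N" using assms that by (intro member_le_sum) (auto intro: sum_nonneg)
    finally show ?thesis .
  qed
  moreover have "?N \<ge> 0" by (intro sum_nonneg) auto
  ultimately show ?thesis using that by blast
qed

lemma Wt_summable:
  assumes "\<epsilon> > 0"
  shows "(\<lambda>x::int^'d::finite. Wt (\<epsilon> *\<^sub>R emb x)) summable_on UNIV"
    and "infsum (\<lambda>x::int^'d::finite. Wt (\<epsilon> *\<^sub>R emb x)) UNIV \<le> (1 + 2/\<epsilon>) ^ CARD('d)"
proof -
  have fin: "sum (\<lambda>x::int^'d. Wt (\<epsilon> *\<^sub>R emb x)) F \<le> (1 + 2/\<epsilon>) ^ CARD('d)" if Ffin: "finite F" for F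
  proof -
    obtain N where N: "N \<ge> 0" "F \<subseteq> {x. \<forall>i. \<bar>x$i\<bar> \<le> N}"
      using finite_bounded_box[OF Ffin] by blast
    have "sum (\<lambda>x::int^'d. Wt (\<epsilon> *\<^sub>R emb x)) F \<le> (\<Sum>x\<in>{x::int^'d. \<forall>i. \<bar>x$i\<bar> \<le> N}. Wt (\<epsilon> *\<^sub>R emb x))"
      by (rule sum_mono2[OF finite_box N(2)]) (simp add: Wt_nonneg)
    also have "\<dots> = (\<Prod>i\<in>(UNIV::'d set). \<Sum>n\<in>{-N..N}. wt (\<epsilon> * of_int n))" by (rule box_sum)
    also have "\<dots> \<le> (\<Prod>i\<in>(UNIV::'d set). 1 + 2/\<epsilon>)"
    proof (rule prod_mono, rule conjI)
      fix i :: 'd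
      show "0 \<le> (\<Sum>n\<in>{-N..N}. wt (\<epsilon> * of_int n))" by (simp add: sum_nonneg wt_nonneg)
      show "(\<Sum>n\<in>{-N..N}. wt (\<epsilon> * of_int n)) \<le> 1 + 2/\<epsilon>" by (rule wt_sum_1d'[OF assms(1) N(1)])
    qed
    also have "\<dots> = (1 + 2/\<epsilon>) ^ CARD('d)" by simp
    finally show ?thesis .
  qed
  show sm: "(\<lambda>x::int^'d::finite. Wt (\<epsilon> *\<^sub>R emb x)) summable_on UNIV"
    by (rule nonneg_bdd_above_summable_on) (auto simp: Wt_nonneg bdd_above_def intro!: exI[of _ "(1 + 2/\<epsilon>) ^ CARD('d)"] fin)
  show "infsum (\<lambda>x::int^'d::finite. Wt (\<epsilon> *\<^sub>R emb x)) UNIV \<le> (1 + 2/\<epsilon>) ^ CARD('d)"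
    by (rule infsum_le_finite_sums[OF sm]) (rule fin)
qed

lemma dominated_summable:
  fixes g :: "real^'d::finite \<Rightarrow> real"
  assumes "\<epsilon> > 0" "\<And>z. 0 \<le> g z" "\<And>z. g z \<le> C * Wt z"
  shows "(\<lambda>x. g (\<epsilon> *\<^sub>R emb x)) summable_on A"
proof -
  have smW: "(\<lambda>x::int^'d. C * Wt (\<epsilon> *\<^sub>R emb x)) summable_on UNIV"
    using Wt_summable(1)[OF assms(1)] by (rule summable_on_cmult_right)
  then have smWA: "(\<lambda>x::int^'d. C * Wt (\<epsilon> *\<^sub>R emb x)) summable_on B" for B
    by (rule summable_on_subset) simp
  show ?thesis
    by (rule summable_on_comparison_test[OF smWA]) (use assms in auto)
qed

lemma dominated_eps_int:
  fixes g :: "real^'d::finite \<Rightarrow> real"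
  assumes "\<epsilon> > 0" "\<epsilon> \<le> 1" "C \<ge> 0" "\<And>z. 0 \<le> g z" "\<And>z. g z \<le> C * Wt z"
  shows "eps_int \<omega> \<epsilon> g \<le> C * 3 ^ CARD('d)"
proof -
  have smW: "(\<lambda>x::int^'d. C * Wt (\<epsilon> *\<^sub>R emb x)) summable_on UNIV"
    using Wt_summable(1)[OF assms(1)] by (rule summable_on_cmult_right)
  then have smWA: "(\<lambda>x::int^'d. C * Wt (\<epsilon> *\<^sub>R emb x)) summable_on B" for B
    by (rule summable_on_subset) simp
  have sm: "(\<lambda>x. g (\<epsilon> *\<^sub>R emb x)) summable_on A" for A
    by (rule summable_on_comparison_test[OF smWA]) (use assms in auto)
  have "infsum (\<lambda>x. g (\<epsilon> *\<^sub>R emb x)) (Cinf \<omega>) \<le> infsum (\<lambda>x::int^'d. C * Wt (\<epsilon> *\<^sub>R emb x)) (Cinf \<omega>)"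
    by (rule infsum_mono[OF sm smWA]) (rule assms(5))
  also have "\<dots> \<le> infsum (\<lambda>x::int^'d. C * Wt (\<epsilon> *\<^sub>R emb x)) UNIV"
    by (rule infsum_mono2[OF smWA smW]) (use assms(3) in \<open>auto simp: Wt_nonneg\<close>)
  also have "\<dots> = C * infsum (\<lambda>x::int^'d. Wt (\<epsilon> *\<^sub>R emb x)) UNIV"
    by (rule infsum_cmult_right) (rule Wt_summable(1)[OF assms(1)])
  also have "\<dots> \<le> C * (1 + 2/\<epsilon>) ^ CARD('d)"
    by (rule mult_left_mono[OF Wt_summable(2)[OF assms(1)] assms(3)])
  also have "\<dots> \<le> C * (3/\<epsilon>) ^ CARD('d)"
  proof -
    have "1 + 2/\<epsilon> \<le> 3/\<epsilon>" using assms(1,2) by (simp add: field_simps)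
    then show ?thesis using assms(1,3) by (intro mult_left_mono power_mono) auto
  qed
  finally have "eps_int \<omega> \<epsilon> g \<le> \<epsilon> ^ CARD('d) * (C * (3/\<epsilon>) ^ CARD('d))"
    unfolding eps_int_def using assms(1) by (simp add: mult_left_mono)
  also have "\<dots> = C * 3 ^ CARD('d)" using assms(1)
    by (simp add: power_divide field_simps)
  finally show "eps_int \<omega> \<epsilon> g \<le> C * 3 ^ CARD('d)" .
qed



lemma pow_bound_aux:
  fixes t :: real assumes "t \<ge> 0"
  shows "(1+t)^n \<le> 2^n * (1 + t^n)"
proof (cases "t \<le> 1")
  case True
  have "(1+t)^n \<le> 2^n" using True assms by (intro power_mono) auto
  also have "\<dots> \<le> 2^n * (1 + t^n)" using assms by simp
  finally show ?thesis .
next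
  case False
  have "(1+t)^n \<le> (2*t)^n" using False by (intro power_mono) auto
  also have "\<dots> = 2^n * t^n" by (simp add: power_mult_distrib)
  also have "\<dots> \<le> 2^n * (1 + t^n)" by simp
  finally show ?thesis .
qed

lemma pow_sq_aux: "((u::real)^(d+1))^2 = u^(2*d)*(u*u)"
  by (simp add: power_mult[symmetric] power_add[symmetric] power2_eq_square[symmetric] algebra_simps)

lemma Wt_lower:
  fixes z :: "real^'d::finite"
  shows "(1/(1+norm z))^(2*CARD('d)) \<le> Wt z"
proof -
  have "(1/(1+norm z))^(2*CARD('d)) = (\<Prod>i\<in>(UNIV::'d set). (1/(1+norm z))^2)"
    by (simp add: power_mult)
  also have "\<dots> \<le> (\<Prod>i\<in>(UNIV::'d set). wt (z$i))"
  proof (rule prod_mono, rule conjI)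
    fix i
    show "0 \<le> (1/(1+norm z))^2" by simp
    have "1 + \<bar>z$i\<bar> \<le> 1 + norm z" using component_le_norm_cart by simp
    then have "1/(1+norm z) \<le> 1/(1+\<bar>z$i\<bar>)" by (intro divide_left_mono) auto
    then have "(1/(1+norm z))^2 \<le> (1/(1+\<bar>z$i\<bar>))^2" by (intro power_mono) auto
    then show "(1/(1+norm z))^2 \<le> wt (z$i)" by (simp add: wt_def power_divide)
  qed
  finally show ?thesis by (simp add: Wt_def)
qed

lemma h_sq_bound:
  fixes h :: "real^'d::finite \<Rightarrow> real"
  assumes "\<forall>x. \<bar>h x\<bar> \<le> c / (1 + norm x ^ (CARD('d) + 1))"
  obtains C where "C \<ge> 0" "\<And>z. (h z)^2 \<le> C * Wt z * (1/(1 + norm z))"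
proof -
  let ?n = "CARD('d) + 1"
  have c: "c \<ge> 0" using assms[rule_format, of 0] by simp
  define C where "C = c^2 * 4^?n"
  have "(h z)^2 \<le> C * Wt z * (1/(1 + norm z))" for z
  proof -
    let ?t = "norm z"
    define u where "u = 1/(1+norm z)"
    have D: "1 + ?t^?n > 0" by (simp add: add_pos_nonneg)
    have u0: "u > 0" and u1: "u \<le> 1" unfolding u_def by (auto simp: add_pos_nonneg)
    have "(1+?t)^?n \<le> 2^?n * (1 + ?t^?n)" by (rule pow_bound_aux) simp
    then have invD: "1/(1 + ?t^?n) \<le> 2^?n * u^?n"
      using D unfolding u_def by (simp add: field_simps power_divide add_pos_nonneg)
    have "\<bar>h z\<bar> \<le> c / (1 + ?t^?n)" using assms by blast
    also have "\<dots> = c * (1/(1 + ?t^?n))" by simp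
    also have "\<dots> \<le> c * (2^?n * u^?n)" by (rule mult_left_mono[OF invD c])
    finally have "\<bar>h z\<bar> \<le> c * (2^?n * u^?n)" .
    then have "\<bar>h z\<bar>^2 \<le> (c * (2^?n * u^?n))^2" by (intro power_mono) auto
    moreover have "(c * (2^?n * u^?n))^2 = C * u^(2*CARD('d)) * (u * u)"
    proof -
      have e1a: "(2::real)^(2*?n) = 4^?n" by (simp add: power_mult)
      have e1: "((2::real)^?n)^2 = 4^?n" using e1a by (simp add: power_even_eq)
      have e2: "(u^?n)^2 = u^(2*CARD('d)) * (u * u)"
        by (rule pow_sq_aux)
      have "(c * (2^?n * u^?n))^2 = c^2 * ((2::real)^?n)^2 * (u^?n)^2"
        by (simp only: power_mult_distrib mult.assoc)
      then show ?thesis unfolding e1 e2 C_def by (simp only: mult.assoc)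
    qed
    ultimately have "(h z)^2 \<le> C * u^(2*CARD('d)) * (u * u)" by simp
    also have "\<dots> \<le> C * u^(2*CARD('d)) * u"
      using u0 u1 by (intro mult_left_mono) (auto simp: C_def mult_le_cancel_right1)
    also have "\<dots> \<le> C * Wt z * u"
      using u0 Wt_lower[of z] unfolding u_def[symmetric] by (intro mult_right_mono mult_left_mono) (auto simp: C_def)
    finally show ?thesis unfolding u_def .
  qed
  moreover have "C \<ge> 0" by (simp add: C_def)
  ultimately show ?thesis using that by blast
qed

lemma h_sq_bound2:
  fixes h :: "real^'d::finite \<Rightarrow> real"
  assumes "C \<ge> 0" "\<And>z. (h z)^2 \<le> C * Wt z * (1/(1 + norm z))"
  shows "(h z)^2 \<le> C * Wt z" and "R \<ge> 0 \<Longrightarrow> z \<notin> cube R \<Longrightarrow> (h z)^2 \<le> (C/(1+R)) * Wt z"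
proof -
  have W: "C * Wt z \<ge> 0" using assms(1) Wt_nonneg by (rule mult_nonneg_nonneg)
  have pz: "0 < 1 + norm z" by (simp add: add_pos_nonneg)
  have "1/(1 + norm z) \<le> 1" using pz by (simp add: divide_le_eq_1)
  then show "(h z)^2 \<le> C * Wt z" using assms(2)[of z] W
    by (meson mult_left_le order_trans norm_ge_zero zero_le_divide_1_iff add_nonneg_nonneg zero_le_one)
  assume R: "R \<ge> 0" "z \<notin> cube R"
  then obtain i where "\<bar>z$i\<bar> > R" by (auto simp: cube_def not_le)
  then have "norm z \<ge> R" using component_le_norm_cart[of z i] by simp
  then have "1/(1 + norm z) \<le> 1/(1+R)" using R by (intro divide_left_mono) auto
  then have "C * Wt z * (1/(1 + norm z)) \<le> C * Wt z * (1/(1+R))" using W by (rule mult_left_mono)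
  then show "(h z)^2 \<le> (C/(1+R)) * Wt z" using assms(2)[of z] by simp
qed



definition clip :: "real \<Rightarrow> real \<Rightarrow> real \<Rightarrow> real" where
  "clip l \<delta> s = max 0 (min 1 ((l + \<delta> - \<bar>s\<bar>)/\<delta>))"
definition cut :: "real \<Rightarrow> real \<Rightarrow> real^'d::finite \<Rightarrow> real" where
  "cut l \<delta> z = (\<Prod>i\<in>UNIV. clip l \<delta> (z$i))"

lemma clip_bounds: "0 \<le> clip l \<delta> s" "clip l \<delta> s \<le> 1" by (auto simp: clip_def)

lemma cut_bounds: "0 \<le> cut l \<delta> z" "cut l \<delta> z \<le> 1"
  unfolding cut_def by (auto intro: prod_nonneg prod_le_1 simp: clip_bounds)

lemma cut_one:
  assumes "\<delta> > 0" "z \<in> cube l" shows "cut l \<delta> z = 1"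
proof -
  have "clip l \<delta> (z$i) = 1" for i
  proof -
    have "\<bar>z$i\<bar> \<le> l" using assms(2) by (simp add: cube_def)
    then have "(l + \<delta> - \<bar>z$i\<bar>)/\<delta> \<ge> 1" using assms(1) by (simp add: field_simps)
    then show ?thesis by (simp add: clip_def)
  qed
  then show ?thesis unfolding cut_def by simp
qed

lemma cut_zero: "\<delta> > 0 \<Longrightarrow> z \<notin> cube (l+\<delta>) \<Longrightarrow> cut l \<delta> z = 0"
proof -
  assume d: "\<delta> > 0" and z: "z \<notin> cube (l+\<delta>)"
  then obtain i where i: "\<bar>z$i\<bar> > l + \<delta>" by (auto simp: cube_def not_le)
  then have "(l + \<delta> - \<bar>z$i\<bar>)/\<delta> < 0" using d by (simp add: divide_neg_pos)
  then have "clip l \<delta> (z$i) = 0" by (simp add: clip_def)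
  then have "\<exists>a\<in>UNIV. clip l \<delta> (z$a) = 0" by blast
  then show ?thesis unfolding cut_def by (simp add: prod_zero_iff)
qed

lemma cut_cont: "continuous_on UNIV (cut l \<delta> :: real^'d::finite \<Rightarrow> real)"
  unfolding cut_def clip_def divide_inverse
  by (intro continuous_intros continuous_on_component continuous_on_id)

lemma bounded_cube: "bounded (cube r)" by (simp add: compact_imp_bounded compact_cube)

lemma cut_Cc: "\<delta> > 0 \<Longrightarrow> Cc (cut l \<delta> :: real^'d::finite \<Rightarrow> real)"
proof -
  assume d: "\<delta> > 0"
  have "{z::real^'d. cut l \<delta> z \<noteq> 0} \<subseteq> cube (l+\<delta>)" using cut_zero[OF d] by blast
  then have "bounded {z::real^'d. cut l \<delta> z \<noteq> 0}" using bounded_cube bounded_subset by blast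
  then show ?thesis unfolding Cc_def using cut_cont by simp
qed

lemma Cc_integrable:
  fixes g :: "real^'d::finite \<Rightarrow> real"
  assumes "Cc g" shows "integrable lborel g"
proof -
  let ?S = "closure {z. g z \<noteq> 0}"
  have "integrable lborel (\<lambda>x. indicator ?S x *\<^sub>R g x)"
    using assms unfolding Cc_def
    by (intro borel_integrable_compact) (auto intro: continuous_on_subset)
  moreover have "indicator ?S x *\<^sub>R g x = g x" for x
    using closure_subset[of "{z. g z \<noteq> 0}"] by (cases "g x = 0") (auto simp: indicator_def)
  then have "(\<lambda>x. indicator ?S x *\<^sub>R g x) = g" by (rule ext)
  ultimately show ?thesis by simp
qed

lemma cube_integrable: "integrable lborel (indicator (cube r) :: real^'d::finite \<Rightarrow> real)"
proof -
  have "cube r \<in> fmeasurable lborel" by (rule fmeasurable_compact[OF compact_cube])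
  then show ?thesis unfolding integrable_indicator_iff by (auto simp: fmeasurable_def)
qed

lemma cube_integral: "r \<ge> 0 \<Longrightarrow> (LINT z|lborel. indicator (cube r :: (real^'d::finite) set) z :: real) = (2*r) ^ CARD('d)"
  using measure_cube[where 'd='d] by simp

lemma Cc_mult: "Cc f \<Longrightarrow> continuous_on UNIV g \<Longrightarrow> Cc (\<lambda>z. f z * g z)"
proof -
  assume f: "Cc f" and g: "continuous_on UNIV g"
  have "{z. f z * g z \<noteq> 0} \<subseteq> {z. f z \<noteq> 0}" by auto
  then have "closure {z. f z * g z \<noteq> 0} \<subseteq> closure {z. f z \<noteq> 0}" by (rule closure_mono)
  have "bounded {z. f z \<noteq> 0}" using f unfolding Cc_def by simp
  then have "bounded {z. f z * g z \<noteq> 0}" by (rule bounded_subset) auto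
  then have "compact (closure {z. f z * g z \<noteq> 0})" by simp
  then show ?thesis using f g unfolding Cc_def by (auto intro: continuous_on_mult)
qed

lemma Omega1_Cc_K:
  fixes \<omega> :: "('d::finite) env" and g :: "real^'d \<Rightarrow> real"
  assumes "\<omega> \<in> Omega1 Q c0" "Cc g"
  shows "((\<lambda>\<epsilon>. eps_int \<omega> \<epsilon> g) \<longlongrightarrow> (LINT z|lborel. g z) * (LINT \<omega>'|muQ Q c0. 1)) (at_right 0)"
proof -
  have H: "\<forall>\<phi> u. Cc \<phi> \<and> continuous_on (Omega c0) u \<longrightarrow>
        ((\<lambda>\<epsilon>. eps_int_sh \<omega> \<epsilon> (\<lambda>z \<omega>'. \<phi> z * u \<omega>'))
           \<longlongrightarrow> (LINT z|lborel. \<phi> z) * (LINT \<omega>'|muQ Q c0. u \<omega>')) (at_right 0)"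
    using assms(1) unfolding Omega1_def by blast
  have "((\<lambda>\<epsilon>. eps_int_sh \<omega> \<epsilon> (\<lambda>z \<omega>'. g z * 1))
           \<longlongrightarrow> (LINT z|lborel. g z) * (LINT \<omega>'|muQ Q c0. 1)) (at_right 0)"
    using H[rule_format, of g "\<lambda>_. 1"] assms(2) continuous_on_const by simp
  moreover have "eps_int_sh \<omega> \<epsilon> (\<lambda>z \<omega>'. g z * 1) = eps_int \<omega> \<epsilon> g" for \<epsilon>
    by (simp add: eps_int_sh_def eps_int_def)
  ultimately show ?thesis by simp
qed

lemma Omega1_cube:
  fixes \<omega> :: "('d::finite) env"
  assumes "\<omega> \<in> Omega1 Q c0" "l > 0"
  shows "((\<lambda>\<epsilon>. eps_int \<omega> \<epsilon> (indicator (cube l))) \<longlongrightarrow> mdens Q c0 * (2 * l) ^ CARD('d)) (at_right 0)"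
  using assms unfolding Omega1_def by auto

lemma ev_pos: "eventually (\<lambda>\<epsilon>::real. \<epsilon> > 0) (at_right 0)"
  by (rule eventually_at_right_less)

lemma K_le:
  fixes \<omega> :: "('d::finite) env"
  assumes om: "\<omega> \<in> Omega1 Q c0" and d: "\<delta> > 0"
  shows "(LINT \<omega>'|muQ Q c0. 1) * 2^CARD('d) \<le> mdens Q c0 * (2*(1+\<delta>))^CARD('d)"
    and "mdens Q c0 * 2^CARD('d) \<le> (LINT \<omega>'|muQ Q c0. 1) * (2*(1+\<delta>))^CARD('d)"
proof -
  let ?K = "LINT \<omega>'|muQ Q c0. (1::real)" and ?m = "mdens Q c0"
  let ?J = "LINT z|lborel. (cut 1 \<delta> :: real^'d \<Rightarrow> real) z"
  have K0: "?K \<ge> 0" by (rule integral_nonneg_AE) simp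
  have sm1: "(\<lambda>x. indicator (cube 1) (\<epsilon> *\<^sub>R emb x :: real^'d) :: real) summable_on A" if "\<epsilon> > 0" for \<epsilon> A
    by (rule summable_support_cube[OF that, where r=1]) simp
  have sm2: "(\<lambda>x. indicator (cube (1+\<delta>)) (\<epsilon> *\<^sub>R emb x :: real^'d) :: real) summable_on A" if "\<epsilon> > 0" for \<epsilon> A
    by (rule summable_support_cube[OF that, where r="1+\<delta>"]) simp
  have sm3: "(\<lambda>x. cut 1 \<delta> (\<epsilon> *\<^sub>R emb x :: real^'d)) summable_on A" if "\<epsilon> > 0" for \<epsilon> A
    by (rule summable_support_cube[OF that, where r="1+\<delta>"]) (rule cut_zero[OF d])
  have le1: "(indicator (cube 1) z :: real) \<le> cut 1 \<delta> z" for z :: "real^'d"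
    using cut_one[OF d, of z] cut_bounds[of 1 \<delta> z] by (cases "z \<in> cube 1") auto
  have le2: "cut 1 \<delta> z \<le> (indicator (cube (1+\<delta>)) z :: real)" for z :: "real^'d"
    using cut_zero[OF d, of z] cut_bounds[of 1 \<delta> z] by (cases "z \<in> cube (1+\<delta>)") auto
  have L1: "((\<lambda>\<epsilon>. eps_int \<omega> \<epsilon> (indicator (cube 1))) \<longlongrightarrow> ?m * (2 * 1) ^ CARD('d)) (at_right 0)"
    by (rule Omega1_cube[OF om]) simp
  have L3: "((\<lambda>\<epsilon>. eps_int \<omega> \<epsilon> (indicator (cube (1+\<delta>)))) \<longlongrightarrow> ?m * (2 * (1+\<delta>)) ^ CARD('d)) (at_right 0)"
    by (rule Omega1_cube[OF om]) (use d in simp)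
  have L2: "((\<lambda>\<epsilon>. eps_int \<omega> \<epsilon> (cut 1 \<delta>)) \<longlongrightarrow> ?J * ?K) (at_right 0)"
    by (rule Omega1_Cc_K[OF om cut_Cc[OF d]])
  have A1: "?m * 2 ^ CARD('d) \<le> ?J * ?K"
    using tendsto_le[OF trivial_limit_at_right_real L2 L1]
      eventually_mono[OF ev_pos eps_int_mono[OF _ sm1 sm3 le1]] by simp
  have A2: "?J * ?K \<le> ?m * (2 * (1+\<delta>)) ^ CARD('d)"
    using tendsto_le[OF trivial_limit_at_right_real L3 L2]
      eventually_mono[OF ev_pos eps_int_mono[OF _ sm3 sm2 le2]] by simp
  have J1: "2 ^ CARD('d) \<le> ?J"
    using integral_mono[OF cube_integrable Cc_integrable[OF cut_Cc[OF d]] le1] cube_integral[where 'd='d, of 1] by simp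
  have J2: "?J \<le> (2 * (1+\<delta>)) ^ CARD('d)"
    using integral_mono[OF Cc_integrable[OF cut_Cc[OF d]] cube_integrable le2] cube_integral[where 'd='d, of "1+\<delta>"] d by simp
  have "?K * 2^CARD('d) \<le> ?K * ?J" by (rule mult_left_mono[OF J1 K0])
  then show "?K * 2^CARD('d) \<le> ?m * (2*(1+\<delta>))^CARD('d)" using A2 by (simp add: mult.commute)
  have "?J * ?K \<le> (2 * (1+\<delta>)) ^ CARD('d) * ?K" by (rule mult_right_mono[OF J2 K0])
  then show "?m * 2^CARD('d) \<le> ?K * (2*(1+\<delta>))^CARD('d)" using A1 by (simp add: mult.commute)
qed

lemma K_eq:
  fixes \<omega> :: "('d::finite) env"
  assumes om: "\<omega> \<in> Omega1 Q c0"
  shows "(LINT \<omega>'|muQ Q c0. 1) = mdens Q c0"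
proof -
  let ?K = "LINT \<omega>'|muQ Q c0. (1::real)" and ?m = "mdens Q c0"
  define \<delta> where "\<delta> n = inverse (real (Suc n))" for n
  have dpos: "\<delta> n > 0" for n by (simp add: \<delta>_def)
  have lim: "(\<lambda>n. (1 + \<delta> n) ^ CARD('d)) \<longlonglongrightarrow> 1"
    using tendsto_power[OF tendsto_add[OF tendsto_const LIMSEQ_inverse_real_of_nat], of 1 "CARD('d)"]
    unfolding \<delta>_def by simp
  have p2: "(2::real)^CARD('d) > 0" by simp
  have e: "(2*(1+\<delta> n))^CARD('d) = 2^CARD('d) * (1+\<delta> n)^CARD('d)" for n
    by (rule power_mult_distrib)
  have a: "?K \<le> ?m * (1 + \<delta> n) ^ CARD('d)" for n
  proof -
    have "?K * 2^CARD('d) \<le> (?m * (1 + \<delta> n) ^ CARD('d)) * 2^CARD('d)"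
      using K_le(1)[OF om dpos[of n]] unfolding e by (simp only: mult_ac)
    then show ?thesis using p2 by (rule mult_le_cancel_right_pos[THEN iffD1, rotated])
  qed
  have b: "?m \<le> ?K * (1 + \<delta> n) ^ CARD('d)" for n
  proof -
    have "?m * 2^CARD('d) \<le> (?K * (1 + \<delta> n) ^ CARD('d)) * 2^CARD('d)"
      using K_le(2)[OF om dpos[of n]] unfolding e by (simp only: mult_ac)
    then show ?thesis using p2 by (rule mult_le_cancel_right_pos[THEN iffD1, rotated])
  qed
  have "?K \<le> ?m * 1" using a by (intro LIMSEQ_le_const[OF tendsto_mult[OF tendsto_const lim]]) auto
  moreover have "?m \<le> ?K * 1" using b by (intro LIMSEQ_le_const[OF tendsto_mult[OF tendsto_const lim]]) auto
  ultimately show ?thesis by simp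
qed

lemma Omega1_Cc:
  fixes \<omega> :: "('d::finite) env"
  assumes "\<omega> \<in> Omega1 Q c0" "Cc g"
  shows "((\<lambda>\<epsilon>. eps_int \<omega> \<epsilon> g) \<longlongrightarrow> mdens Q c0 * (LINT z|lborel. g z)) (at_right 0)"
  using Omega1_Cc_K[OF assms] K_eq[OF assms(1)] by (simp add: mult.commute)



lemma Cc_inf_Cc: "Cc_inf \<phi> \<Longrightarrow> Cc \<phi>"
proof -
  assume a: "Cc_inf \<phi>"
  then have "continuous_on UNIV (iter_pdiff [] \<phi>)" unfolding Cc_inf_def smooth_def by blast
  then show ?thesis using a unfolding Cc_inf_def Cc_def by simp
qed

lemma Cc_mult2: "Cc f \<Longrightarrow> continuous_on UNIV g \<Longrightarrow> Cc (\<lambda>z. g z * f z)"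
proof -
  assume "Cc f" "continuous_on UNIV g"
  then have "Cc (\<lambda>z. f z * g z)" by (rule Cc_mult)
  moreover have "(\<lambda>z. f z * g z) = (\<lambda>z. g z * f z)" by (simp add: mult.commute)
  ultimately show ?thesis by simp
qed

lemma Cc_cont: "Cc f \<Longrightarrow> continuous_on UNIV f" by (simp add: Cc_def)

lemma Cc_sq: "Cc (f :: real^'d::finite \<Rightarrow> real) \<Longrightarrow> Cc (\<lambda>z. (f z)^2)"
proof -
  assume f: "Cc f"
  have "Cc (\<lambda>z. f z * f z)" by (rule Cc_mult[OF f Cc_cont[OF f]])
  then show ?thesis by (simp add: power2_eq_square)
qed

lemma Cc_L2eps:
  fixes g :: "real^'d::finite \<Rightarrow> real"
  assumes "Cc g" "\<epsilon> > 0" shows "L2eps \<omega> \<epsilon> g"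
proof -
  obtain r where r: "r \<ge> 0" "\<And>z. z \<notin> cube r \<Longrightarrow> g z = 0"
    using Cc_cube[of g] assms(1) unfolding Cc_def by blast
  show ?thesis unfolding L2eps_def
    by (rule summable_support_cube[OF assms(2), where r=r, of "\<lambda>z. (g z)^2"]) (simp add: r(2))
qed

lemma Cc_L2:
  fixes g :: "real^'d::finite \<Rightarrow> real"
  assumes "Cc g" shows "L2 lborel g"
proof -
  have "g \<in> borel_measurable borel" by (rule borel_measurable_continuous_onI[OF Cc_cont[OF assms]])
  then have "g \<in> borel_measurable lborel" by simp
  moreover have "integrable lborel (\<lambda>z. (g z)^2)" by (rule Cc_integrable[OF Cc_sq[OF assms]])
  ultimately show ?thesis unfolding L2_def by simp
qed

lemma tendsto_ev_bounded:
  assumes "(f \<longlongrightarrow> (L::real)) F" shows "\<exists>B. eventually (\<lambda>x. f x \<le> B) F"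
proof -
  have "eventually (\<lambda>x. f x < L + 1) F" using order_tendstoD(2)[OF assms] by simp
  then show ?thesis by (intro exI[of _ "L+1"]) (auto elim: eventually_mono)
qed

lemma weak_const:
  fixes \<omega> :: "('d::finite) env" and \<phi> :: "real^'d \<Rightarrow> real"
  assumes om: "\<omega> \<in> Omega1 Q c0" and phi: "Cc_inf \<phi>"
  shows "weak_conv (mdens Q c0) \<omega> (\<lambda>_. \<phi>) \<phi>"
proof -
  have Cphi: "Cc \<phi>" by (rule Cc_inf_Cc[OF phi])
  have "\<exists>B. eventually (\<lambda>\<epsilon>. eps_int \<omega> \<epsilon> (\<lambda>z. (\<phi> z)^2) \<le> B) (at_right 0)"
    by (rule tendsto_ev_bounded[OF Omega1_Cc[OF om Cc_sq[OF Cphi]]])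
  moreover have "((\<lambda>\<epsilon>. eps_int \<omega> \<epsilon> (\<lambda>z. \<phi> z * \<psi> z)) \<longlongrightarrow> mdens Q c0 * (LINT x|lborel. \<phi> x * \<psi> x)) (at_right 0)"
    if "Cc_inf \<psi>" for \<psi>
    by (rule Omega1_Cc[OF om Cc_mult[OF Cphi Cc_cont[OF Cc_inf_Cc[OF that]]]])
  ultimately show ?thesis unfolding weak_conv_def
    using Cc_L2eps[OF Cphi] Cc_L2[OF Cphi] by auto
qed

lemma infsum_sq_expand:
  fixes p q :: "'a \<Rightarrow> real"
  assumes sp: "(\<lambda>x. (p x)^2) summable_on A" and sq: "(\<lambda>x. (q x)^2) summable_on A"
  shows "(\<lambda>x. p x * q x) summable_on A"
    and "infsum (\<lambda>x. (p x - q x)^2) A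
         = infsum (\<lambda>x. p x * p x) A - 2 * infsum (\<lambda>x. p x * q x) A + infsum (\<lambda>x. q x * q x) A"
proof -
  have spp: "(\<lambda>x. p x * p x) summable_on A" using sp by (simp add: power2_eq_square)
  have sqq: "(\<lambda>x. q x * q x) summable_on A" using sq by (simp add: power2_eq_square)
  have s2: "(\<lambda>x. 2 * (p x)^2 + 2 * (q x)^2) summable_on A"
    by (intro summable_on_add summable_on_cmult_right sp sq)
  have spq2: "(\<lambda>x. (p x + q x)^2) summable_on A"
  proof (rule summable_on_comparison_test[OF s2])
    fix x show "(p x + q x)^2 \<le> 2 * (p x)^2 + 2 * (q x)^2"
      using sum_squares_ge_zero[of "p x - q x" 0] by (simp add: power2_eq_square algebra_simps)
  qed simp
  have s3: "(\<lambda>x. (1/2) * ((p x + q x)^2 + (- (p x * p x) + - (q x * q x)))) summable_on A"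
    by (intro summable_on_cmult_right summable_on_add spq2
        summable_on_uminus[THEN iffD2] spp sqq)
  have eq: "(\<lambda>x. (1/2) * ((p x + q x)^2 + (- (p x * p x) + - (q x * q x)))) = (\<lambda>x. p x * q x)"
    by (rule ext) (simp add: power2_eq_square algebra_simps)
  show spq: "(\<lambda>x. p x * q x) summable_on A" using s3 unfolding eq .
  have eq2: "(\<lambda>x. (p x - q x)^2) = (\<lambda>x. p x * p x + ((-2) * (p x * q x) + q x * q x))"
    by (rule ext) (simp add: power2_eq_square algebra_simps)
  have "infsum (\<lambda>x. (p x - q x)^2) A
      = infsum (\<lambda>x. p x * p x) A + (infsum (\<lambda>x. (-2) * (p x * q x)) A + infsum (\<lambda>x. q x * q x) A)"
  proof -
    have i1: "infsum (\<lambda>x. p x * p x + ((-2) * (p x * q x) + q x * q x)) A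
        = infsum (\<lambda>x. p x * p x) A + infsum (\<lambda>x. (-2) * (p x * q x) + q x * q x) A"
      by (rule infsum_add[OF spp]) (intro summable_on_add summable_on_cmult_right spq sqq)
    have i2: "infsum (\<lambda>x. (-2) * (p x * q x) + q x * q x) A
        = infsum (\<lambda>x. (-2) * (p x * q x)) A + infsum (\<lambda>x. q x * q x) A"
      by (rule infsum_add[OF summable_on_cmult_right[OF spq] sqq])
    show ?thesis unfolding eq2 i1 i2 ..
  qed
  also have "infsum (\<lambda>x. (-2) * (p x * q x)) A = (-2) * infsum (\<lambda>x. p x * q x) A"
    by (rule infsum_cmult_right) (rule spq)
  finally show "infsum (\<lambda>x. (p x - q x)^2) A
         = infsum (\<lambda>x. p x * p x) A - 2 * infsum (\<lambda>x. p x * q x) A + infsum (\<lambda>x. q x * q x) A"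
    by simp
qed



theorem mainTheorem13:
  fixes Q :: "('d::finite) env measure" and c0 :: real
    and \<psi> :: "nat \<Rightarrow> 'd env \<times> (int ^ 'd) \<Rightarrow> real"
    and f :: "nat \<Rightarrow> int ^ 'd \<Rightarrow> nat \<Rightarrow> 'd env \<Rightarrow> real"
    and \<omega> :: "'d env"
    and h :: "real ^ 'd \<Rightarrow> real" and h\<epsilon> :: "real \<Rightarrow> real ^ 'd \<Rightarrow> real"
  assumes dim: "CARD('d) \<ge> 2"
    and c0: "c0 > 0"
    and Q_prob: "prob_space Q"
    and Q_sets: "sets Q = sets (OmegaM c0)"
    and Q_inv: "\<forall>x. shift x \<in> measurable Q Q \<and> distr Q Q (shift x) = Q"
    and Q_erg: "\<forall>A\<in>sets Q. (\<forall>x. shift x -` A \<inter> space Q = A) \<longrightarrow>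
                   measure Q A = 0 \<or> measure Q A = 1"
    and Q_Omega0: "measure Q (Omega0 c0) = 1"
    and psi_sol: "\<forall>j. \<psi> j \<in> L2sol Q c0"
    and psi_dense: "\<forall>v\<in>L2sol Q c0. \<forall>\<delta>>0. \<exists>j.
                      (LINT z|Mmeas Q c0. (v z - \<psi> j z)^2) < \<delta>"
    and f_cont: "\<forall>j. \<forall>e\<in>unitB. \<forall>k. continuous_on (Omega c0) (f j e k)"
    and f_approx: "\<forall>j. \<forall>e\<in>unitB.
                     (\<lambda>k. LINT \<omega>'|muQ Q c0. (f j e k \<omega>' - Psi \<psi> j e \<omega>')^2) \<longlonglongrightarrow> 0"
    and \<omega>_reg: "\<omega> \<in> OmegaStar Q c0 \<psi> f"
    and h_cont: "continuous_on UNIV h"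
    and h_decay: "\<exists>c. \<forall>x. \<bar>h x\<bar> \<le> c / (1 + norm x ^ (CARD('d) + 1))"
    and h_strong: "strong_conv (mdens Q c0) \<omega> h\<epsilon> h"
  shows "((\<lambda>\<epsilon>. eps_int \<omega> \<epsilon> (\<lambda>x. (h\<epsilon> \<epsilon> x - h x)^2)) \<longlongrightarrow> 0) (at_right 0)"
proof -
  let ?m = "mdens Q c0"
  have om: "\<omega> \<in> Omega1 Q c0" using \<omega>_reg unfolding OmegaStar_def by blast
  have m0: "?m \<ge> 0" by (simp add: mdens_def)
  have S1: "\<forall>\<epsilon>>0. L2eps \<omega> \<epsilon> (h\<epsilon> \<epsilon>)"
    and S2: "\<exists>B. eventually (\<lambda>\<epsilon>. eps_int \<omega> \<epsilon> (\<lambda>z. (h\<epsilon> \<epsilon> z)^2) \<le> B) (at_right 0)"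
    and S3: "L2 lborel h"
    and S4: "\<And>\<phi>\<epsilon> \<phi>. weak_conv ?m \<omega> \<phi>\<epsilon> \<phi> \<Longrightarrow>
        ((\<lambda>\<epsilon>. eps_int \<omega> \<epsilon> (\<lambda>z. h\<epsilon> \<epsilon> z * \<phi>\<epsilon> \<epsilon> z)) \<longlongrightarrow> ?m * (LINT x|lborel. h x * \<phi> x)) (at_right 0)"
    using h_strong unfolding strong_conv_def by blast+
  obtain c where c: "\<forall>x. \<bar>h x\<bar> \<le> c / (1 + norm x ^ (CARD('d) + 1))" using h_decay by blast
  obtain C where C0: "C \<ge> 0" and hC: "\<And>z. (h z)^2 \<le> C * Wt z * (1/(1 + norm z))"
    using h_sq_bound[OF c] by blast
  have hW: "(h z)^2 \<le> C * Wt z" for z by (rule h_sq_bound2(1)[OF C0 hC])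
  have htail: "R \<ge> 0 \<Longrightarrow> z \<notin> cube R \<Longrightarrow> (h z)^2 \<le> (C/(1+R)) * Wt z" for R z
    by (rule h_sq_bound2(2)[OF C0 hC])
  have hsum: "(\<lambda>x. (h (\<epsilon> *\<^sub>R emb x))^2) summable_on A" if "\<epsilon> > 0" for \<epsilon> A
    by (rule dominated_summable[OF that, of "\<lambda>z. (h z)^2" C]) (auto simp: hW)
  have ev_lt1: "eventually (\<lambda>\<epsilon>::real. \<epsilon> < 1) (at_right 0)"
    using eventually_at_right[of "0::real" 1] by (auto intro!: exI[of _ 1])
  have ev01: "eventually (\<lambda>\<epsilon>::real. 0 < \<epsilon> \<and> \<epsilon> < 1) (at_right 0)"
    using eventually_conj[OF ev_pos ev_lt1] .
  have hh_int: "integrable lborel (\<lambda>z. h z * h z)"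
    using S3 unfolding L2_def by (simp add: power2_eq_square)
  have hh_cont: "continuous_on UNIV (\<lambda>z. h z * h z)"
    by (intro continuous_on_mult h_cont)

  have W2: "weak_conv ?m \<omega> h\<epsilon> h"
    unfolding weak_conv_def using S1 S2 S3 S4[OF weak_const[OF om]] by auto
  have limA: "((\<lambda>\<epsilon>. eps_int \<omega> \<epsilon> (\<lambda>z. h\<epsilon> \<epsilon> z * h\<epsilon> \<epsilon> z)) \<longlongrightarrow> ?m * (LINT x|lborel. h x * h x)) (at_right 0)"
    by (rule S4[OF W2])

  have W3: "weak_conv ?m \<omega> (\<lambda>_. h) h"
  proof -
    have "\<exists>B. eventually (\<lambda>\<epsilon>. eps_int \<omega> \<epsilon> (\<lambda>z. (h z)^2) \<le> B) (at_right 0)"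
    proof (intro exI[of _ "C * 3 ^ CARD('d)"])
      show "eventually (\<lambda>\<epsilon>. eps_int \<omega> \<epsilon> (\<lambda>z. (h z)^2) \<le> C * 3 ^ CARD('d)) (at_right 0)"
        using ev01 by (rule eventually_mono)
          (rule dominated_eps_int[OF _ _ C0, of _ "\<lambda>z. (h z)^2"], auto simp: hW)
    qed
    moreover have "((\<lambda>\<epsilon>. eps_int \<omega> \<epsilon> (\<lambda>z. h z * \<phi> z)) \<longlongrightarrow> ?m * (LINT x|lborel. h x * \<phi> x)) (at_right 0)"
      if "Cc_inf \<phi>" for \<phi>
      by (rule Omega1_Cc[OF om Cc_mult2[OF Cc_inf_Cc[OF that] h_cont]])
    ultimately show ?thesis unfolding weak_conv_def L2eps_def using hsum S3 by auto
  qed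
  have limB: "((\<lambda>\<epsilon>. eps_int \<omega> \<epsilon> (\<lambda>z. h\<epsilon> \<epsilon> z * h z)) \<longlongrightarrow> ?m * (LINT x|lborel. h x * h x)) (at_right 0)"
    using S4[OF W3] by simp

  define g where "g R z = cut (real R) 1 z * (h z * h z)" for R :: nat and z
  have gCc: "Cc (g R)" for R
    unfolding g_def by (rule Cc_mult[OF cut_Cc hh_cont]) simp
  have limR: "((\<lambda>\<epsilon>. eps_int \<omega> \<epsilon> (g R)) \<longlongrightarrow> ?m * (LINT z|lborel. g R z)) (at_right 0)" for R
    by (rule Omega1_Cc[OF om gCc])
  have gle: "?m * (LINT z|lborel. g R z) \<le> ?m * (LINT x|lborel. h x * h x)" for R
  proof (rule mult_left_mono[OF _ m0], rule integral_mono[OF Cc_integrable[OF gCc] hh_int])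
    fix z :: "real^'d"
    have "cut (real R) 1 z * (h z * h z) \<le> 1 * (h z * h z)"
      by (rule mult_right_mono[OF cut_bounds(2)]) simp
    then show "g R z \<le> h z * h z" by (simp add: g_def)
  qed
  have cbound: "eps_int \<omega> \<epsilon> (\<lambda>z. h z * h z) \<le> eps_int \<omega> \<epsilon> (g R) + (C/(1+real R)) * 3 ^ CARD('d)"
    if e: "0 < \<epsilon>" "\<epsilon> < 1" for \<epsilon> R
  proof -
    define t where "t z = (1 - cut (real R) 1 z) * (h z * h z)" for z
    have t0: "0 \<le> t z" for z unfolding t_def using cut_bounds(2)[of "real R" 1 z] by simp
    have tle: "t z \<le> (C/(1+real R)) * Wt z" for z
    proof (cases "z \<in> cube (real R)")
      case True
      then have "t z = 0" unfolding t_def using cut_one[of 1 z "real R"] by simp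
      then show ?thesis using C0 Wt_nonneg[of z] by simp
    next
      case False
      have "t z \<le> 1 * (h z * h z)" unfolding t_def
        by (rule mult_right_mono) (auto simp: cut_bounds(1))
      also have "\<dots> \<le> (C/(1+real R)) * Wt z" using htail[OF _ False] by (simp add: power2_eq_square)
      finally show ?thesis .
    qed
    obtain r where r: "r \<ge> 0" "\<And>z. z \<notin> cube r \<Longrightarrow> g R z = 0"
      using Cc_cube[of "g R"] gCc[of R] unfolding Cc_def by blast
    have sg: "(\<lambda>x. g R (\<epsilon> *\<^sub>R emb x)) summable_on Cinf \<omega>"
      by (rule summable_support_cube[OF e(1), where r=r]) (rule r(2))
    have st: "(\<lambda>x. t (\<epsilon> *\<^sub>R emb x)) summable_on Cinf \<omega>"
      by (rule dominated_summable[OF e(1), of t "C/(1+real R)"]) (rule t0, rule tle)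
    have split: "(\<lambda>x. h (\<epsilon> *\<^sub>R emb x) * h (\<epsilon> *\<^sub>R emb x)) = (\<lambda>x. g R (\<epsilon> *\<^sub>R emb x) + t (\<epsilon> *\<^sub>R emb x))"
      by (rule ext) (simp add: g_def t_def algebra_simps)
    have "eps_int \<omega> \<epsilon> (\<lambda>z. h z * h z) = eps_int \<omega> \<epsilon> (g R) + eps_int \<omega> \<epsilon> t"
      unfolding eps_int_def split infsum_add[OF sg st] by (simp add: algebra_simps)
    also have "eps_int \<omega> \<epsilon> t \<le> (C/(1+real R)) * 3 ^ CARD('d)"
      by (rule dominated_eps_int[OF e(1) less_imp_le[OF e(2)] _ t0 tle]) (use C0 in simp)
    finally show ?thesis by simp
  qed

  have expand: "eps_int \<omega> \<epsilon> (\<lambda>x. (h\<epsilon> \<epsilon> x - h x)^2)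
      = eps_int \<omega> \<epsilon> (\<lambda>z. h\<epsilon> \<epsilon> z * h\<epsilon> \<epsilon> z) - 2 * eps_int \<omega> \<epsilon> (\<lambda>z. h\<epsilon> \<epsilon> z * h z)
        + eps_int \<omega> \<epsilon> (\<lambda>z. h z * h z)" if e: "\<epsilon> > 0" for \<epsilon>
  proof -
    have sp: "(\<lambda>x. (h\<epsilon> \<epsilon> (\<epsilon> *\<^sub>R emb x))^2) summable_on Cinf \<omega>"
      using S1 e unfolding L2eps_def by blast
    show ?thesis unfolding eps_int_def infsum_sq_expand(2)[OF sp hsum[OF e]]
      by (simp add: algebra_simps)
  qed
  have Gnn: "eps_int \<omega> \<epsilon> (\<lambda>x. (h\<epsilon> \<epsilon> x - h x)^2) \<ge> 0" if "\<epsilon> > 0" for \<epsilon>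
    unfolding eps_int_def using that by (intro mult_nonneg_nonneg infsum_nonneg) auto

  let ?A = "?m * (LINT x|lborel. h x * h x)"
  show ?thesis
    unfolding tendsto_iff
  proof (intro allI impI)
    fix \<eta> :: real assume \<eta>: "\<eta> > 0"
    obtain R :: nat where R: "4 * C * 3 ^ CARD('d) / \<eta> < real R" using reals_Archimedean2 by blast
    have "4 * C * 3 ^ CARD('d) < \<eta> * real R" using R \<eta> by (simp add: pos_divide_less_eq mult.commute)
    then have Rb: "(C/(1+real R)) * 3 ^ CARD('d) < \<eta>/4"
      using \<eta> C0 by (simp add: field_simps)
    have e1: "eventually (\<lambda>\<epsilon>. dist (eps_int \<omega> \<epsilon> (\<lambda>z. h\<epsilon> \<epsilon> z * h\<epsilon> \<epsilon> z)) ?A < \<eta>/8) (at_right 0)"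
      by (rule tendstoD[OF limA]) (use \<eta> in simp)
    have e2: "eventually (\<lambda>\<epsilon>. dist (eps_int \<omega> \<epsilon> (\<lambda>z. h\<epsilon> \<epsilon> z * h z)) ?A < \<eta>/8) (at_right 0)"
      by (rule tendstoD[OF limB]) (use \<eta> in simp)
    have e3: "eventually (\<lambda>\<epsilon>. eps_int \<omega> \<epsilon> (g R) < ?m * (LINT z|lborel. g R z) + \<eta>/8) (at_right 0)"
      using order_tendstoD(2)[OF limR[of R]] \<eta> by simp
    show "eventually (\<lambda>\<epsilon>. dist (eps_int \<omega> \<epsilon> (\<lambda>x. (h\<epsilon> \<epsilon> x - h x)^2)) 0 < \<eta>) (at_right 0)"
      using eventually_conj[OF ev01 eventually_conj[OF e1 eventually_conj[OF e2 e3]]]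
    proof (rule eventually_mono, elim conjE)
      fix \<epsilon> :: real
      assume p: "0 < \<epsilon>" "\<epsilon> < 1"
        and a: "dist (eps_int \<omega> \<epsilon> (\<lambda>z. h\<epsilon> \<epsilon> z * h\<epsilon> \<epsilon> z)) ?A < \<eta>/8"
        and b: "dist (eps_int \<omega> \<epsilon> (\<lambda>z. h\<epsilon> \<epsilon> z * h z)) ?A < \<eta>/8"
        and gg: "eps_int \<omega> \<epsilon> (g R) < ?m * (LINT z|lborel. g R z) + \<eta>/8"
      have cc: "eps_int \<omega> \<epsilon> (\<lambda>z. h z * h z) \<le> eps_int \<omega> \<epsilon> (g R) + (C/(1+real R)) * 3 ^ CARD('d)"
        by (rule cbound[OF p])
      have G0: "eps_int \<omega> \<epsilon> (\<lambda>x. (h\<epsilon> \<epsilon> x - h x)^2) \<ge> 0" by (rule Gnn[OF p(1)])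
      have "eps_int \<omega> \<epsilon> (\<lambda>x. (h\<epsilon> \<epsilon> x - h x)^2) < \<eta>"
        using expand[OF p(1)] a b gg cc Rb gle[of R] unfolding dist_real_def by linarith
      then show "dist (eps_int \<omega> \<epsilon> (\<lambda>x. (h\<epsilon> \<epsilon> x - h x)^2)) 0 < \<eta>" using G0 by simp
    qed
  qed
qed


end
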